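(* Let $X\subset[0,1]$ with a $\sigma$-algebra $\mathcal F$ containing the Borel subsets of $X$, let $\mu\colon\mathcal F\to[0,1]$ be a monotone measure, let $A\in\mathcal F$, and let $f\colon X\to[0,1]$ be a non-decreasing measurable function. Writing $N(\phi)=\sup_{\alpha\in[0,1]}\alpha\,\mu(A\cap\{\phi\ge\alpha\})$ for the Shilkret integral of a measurable $\phi\colon X\to[0,1]$ over $A$, and $K=\mu(A)\cdot N(x)$ (where $N(x)$ is the Shilkret integral of the identity function $x\mapsto x$), if $K>0$ then $$N(f)\le \frac{1}{\sqrt K}\,\big(N(f^2)\big)^{1/4}\big(N(x^2f^2)\big)^{1/4}.$$
   Context: A monotone measure is a map $\mu$ on $\mathcal F$ with $\mu(\emptyset)=0$, $\mu(X)>0$ and $\mu(A)\le\mu(B)$ whenever $A\subset B$. Here $\{\phi\ge\alpha\}=\{x\in X:\phi(x)\ge\alpha\}$, and $x^2f^2$ denotes the function $x\mapsto x^2 f(x)^2$. *)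

theory Defs
  imports "HOL-Analysis.Analysis"
begin

definition monotone_measure :: "'a set \<Rightarrow> 'a set set \<Rightarrow> ('a set \<Rightarrow> real) \<Rightarrow> bool" where
  "monotone_measure X F \<mu> \<longleftrightarrow> \<mu> {} = 0 \<and> \<mu> X > 0 \<and>
     (\<forall>B\<in>F. \<forall>C\<in>F. B \<subseteq> C \<longrightarrow> \<mu> B \<le> \<mu> C)"

definition shilkret :: "'a set \<Rightarrow> ('a set \<Rightarrow> real) \<Rightarrow> 'a set \<Rightarrow> ('a \<Rightarrow> real) \<Rightarrow> real" where
  "shilkret X \<mu> A \<phi> = (SUP \<alpha>\<in>{0..1}. \<alpha> * \<mu> (A \<inter> {x\<in>X. \<phi> x \<ge> \<alpha>}))"

end

theory Submission
  imports Defs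
begin

lemma upper_in_F:
  fixes X :: "real set" and g :: "real \<Rightarrow> real"
  assumes X: "X \<subseteq> {0..1}" and bor: "\<forall>B\<in>sets borel. X \<inter> B \<in> F"
    and mono: "mono_on X g"
  shows "{x\<in>X. g x \<ge> c} \<in> F"
proof -
  define U where "U = {x\<in>X. g x \<ge> c}"
  show ?thesis
  proof (cases "U = {}")
    case True
    have "X \<inter> {} \<in> F" using bor by blast
    then show ?thesis unfolding U_def[symmetric] using True by simp
  next
    case False
    have bdd: "bdd_below U" using X unfolding U_def bdd_below_def by (rule_tac x=0 in exI) auto
    define s where "s = Inf U"
    have low: "\<And>x. x \<in> U \<Longrightarrow> s \<le> x" using bdd s_def by (simp add: cInf_lower)
    show ?thesis
    proof (cases "s \<in> U")
      case True
      have "U = X \<inter> {s..}"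
      proof
        show "U \<subseteq> X \<inter> {s..}" using low U_def by auto
        show "X \<inter> {s..} \<subseteq> U"
        proof
          fix x assume x: "x \<in> X \<inter> {s..}"
          have "g s \<le> g x" using mono_onD[OF mono] True x U_def by auto
          then show "x \<in> U" using True x U_def by auto
        qed
      qed
      then show ?thesis unfolding U_def[symmetric] using bor atLeast_borel by metis
    next
      case False
      have "U = X \<inter> {s<..}"
      proof
        show "U \<subseteq> X \<inter> {s<..}" using low U_def False by force
        show "X \<inter> {s<..} \<subseteq> U"
        proof
          fix x assume x: "x \<in> X \<inter> {s<..}"
          then have "Inf U < x" using s_def by simp
          then obtain u where u: "u \<in> U" "u < x" using cInf_less_iff[OF \<open>U \<noteq> {}\<close> bdd] by auto
          have "g u \<le> g x" using mono_onD[OF mono] u x U_def by auto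
          then show "x \<in> U" using u x U_def by auto
        qed
      qed
      then show ?thesis unfolding U_def[symmetric] using bor greaterThan_borel by metis
    qed
  qed
qed

lemma sq_le_aux:
  fixes c m :: real
  assumes "0 \<le> m" "m \<le> 1"
  shows "(c * m)\<^sup>2 \<le> c\<^sup>2 * m"
proof -
  have "c\<^sup>2 * m * m \<le> c\<^sup>2 * m * 1" using assms by (intro mult_left_mono) auto
  moreover have "(c * m)\<^sup>2 = c\<^sup>2 * m * m" by (simp add: power2_eq_square)
  ultimately show ?thesis by simp
qed

lemma sq_powr4:
  fixes y :: real
  assumes "0 \<le> y"
  shows "(y\<^sup>2) powr (1/4) = sqrt y"
proof (cases "y = 0")
  case True then show ?thesis by simp
next
  case False
  then have yp: "0 < y" using assms by simp
  have "(y\<^sup>2) powr (1/4) = (y powr (real 2)) powr (1/4)" using yp by (simp add: powr_realpow)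
  also have "\<dots> = y powr (1/2)" by (simp add: powr_powr)
  also have "\<dots> = sqrt y" using assms by (simp add: powr_half_sqrt)
  finally show ?thesis .
qed

lemma shilkret_props:
  fixes \<mu> :: "'a set \<Rightarrow> real"
  assumes mr: "\<forall>B\<in>F. 0 \<le> \<mu> B \<and> \<mu> B \<le> 1"
    and ms: "\<forall>\<alpha>. A \<inter> {x\<in>X. \<phi> x \<ge> \<alpha>} \<in> F"
  shows "\<And>\<alpha>. \<alpha> \<in> {0..1} \<Longrightarrow> \<alpha> * \<mu> (A \<inter> {x\<in>X. \<phi> x \<ge> \<alpha>}) \<le> shilkret X \<mu> A \<phi>"
    and "\<And>c. (\<And>\<alpha>. \<alpha> \<in> {0..1} \<Longrightarrow> \<alpha> * \<mu> (A \<inter> {x\<in>X. \<phi> x \<ge> \<alpha>}) \<le> c) \<Longrightarrow> shilkret X \<mu> A \<phi> \<le> c"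
    and "0 \<le> shilkret X \<mu> A \<phi>"
proof -
  have bdd: "bdd_above ((\<lambda>\<alpha>. \<alpha> * \<mu> (A \<inter> {x\<in>X. \<phi> x \<ge> \<alpha>})) ` {0..1})"
  proof (rule bdd_aboveI2[where M=1])
    fix \<alpha> :: real assume "\<alpha> \<in> {0..1}"
    moreover have "0 \<le> \<mu> (A \<inter> {x\<in>X. \<phi> x \<ge> \<alpha>}) \<and> \<mu> (A \<inter> {x\<in>X. \<phi> x \<ge> \<alpha>}) \<le> 1"
      using mr ms by blast
    ultimately show "\<alpha> * \<mu> (A \<inter> {x\<in>X. \<phi> x \<ge> \<alpha>}) \<le> 1" by (simp add: mult_le_one)
  qed
  show up: "\<And>\<alpha>. \<alpha> \<in> {0..1} \<Longrightarrow> \<alpha> * \<mu> (A \<inter> {x\<in>X. \<phi> x \<ge> \<alpha>}) \<le> shilkret X \<mu> A \<phi>"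
    unfolding shilkret_def using bdd by (rule cSUP_upper2) auto
  show "\<And>c. (\<And>\<alpha>. \<alpha> \<in> {0..1} \<Longrightarrow> \<alpha> * \<mu> (A \<inter> {x\<in>X. \<phi> x \<ge> \<alpha>}) \<le> c) \<Longrightarrow> shilkret X \<mu> A \<phi> \<le> c"
    unfolding shilkret_def by (rule cSUP_least) auto
  show "0 \<le> shilkret X \<mu> A \<phi>" using up[of 0] by simp
qed

theorem mainTheorem2:
  fixes X :: "real set" and F :: "real set set" and \<mu> :: "real set \<Rightarrow> real"
    and A :: "real set" and f :: "real \<Rightarrow> real"
  assumes X_sub: "X \<subseteq> {0..1}"
    and sigma: "sigma_algebra X F"
    and borel_in: "\<forall>B\<in>sets borel. X \<inter> B \<in> F"
    and mm: "monotone_measure X F \<mu>"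
    and mu_range: "\<forall>B\<in>F. 0 \<le> \<mu> B \<and> \<mu> B \<le> 1"
    and A_in: "A \<in> F"
    and f_range: "\<forall>x\<in>X. 0 \<le> f x \<and> f x \<le> 1"
    and f_mono: "mono_on X f"
    and f_meas: "\<forall>B\<in>sets borel. f -` B \<inter> X \<in> F"
    and K_pos: "\<mu> A * shilkret X \<mu> A (\<lambda>x. x) > 0"
  shows "shilkret X \<mu> A f \<le>
           1 / sqrt (\<mu> A * shilkret X \<mu> A (\<lambda>x. x))
           * (shilkret X \<mu> A (\<lambda>x. (f x)\<^sup>2)) powr (1/4)
           * (shilkret X \<mu> A (\<lambda>x. x\<^sup>2 * (f x)\<^sup>2)) powr (1/4)"
proof -
  interpret sigma_algebra X F by (rule sigma)
  have mono_meas: "\<And>B C. B \<in> F \<Longrightarrow> C \<in> F \<Longrightarrow> B \<subseteq> C \<Longrightarrow> \<mu> B \<le> \<mu> C"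
    using mm unfolding monotone_measure_def by blast
  have AF: "A \<inter> {x\<in>X. g x \<ge> c} \<in> F" if gm: "mono_on X g" for g :: "real \<Rightarrow> real" and c
    by (rule Int[OF A_in upper_in_F[OF X_sub borel_in gm]])
  have m_id: "mono_on X (\<lambda>x. x)" by (simp add: mono_onI)
  have m_f2: "mono_on X (\<lambda>x. (f x)\<^sup>2)"
    by (rule mono_onI) (use f_range mono_onD[OF f_mono] in \<open>auto intro: power_mono\<close>)
  have m_xf: "mono_on X (\<lambda>x. x\<^sup>2 * (f x)\<^sup>2)"
  proof (rule mono_onI)
    fix r s assume rs: "r \<in> X" "s \<in> X" "r \<le> s"
    have "0 \<le> r" using rs X_sub by auto
    then have "r\<^sup>2 \<le> s\<^sup>2" using rs by (auto intro: power_mono)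
    moreover have "(f r)\<^sup>2 \<le> (f s)\<^sup>2" using f_range mono_onD[OF f_mono] rs by (auto intro: power_mono)
    ultimately show "r\<^sup>2 * (f r)\<^sup>2 \<le> s\<^sup>2 * (f s)\<^sup>2" by (auto intro: mult_mono)
  qed
  note Pf = shilkret_props[OF mu_range, of A X f, OF allI[OF AF[OF f_mono]]]
  note Px = shilkret_props[OF mu_range, of A X "\<lambda>x. x", OF allI[OF AF[OF m_id]]]
  note Pf2 = shilkret_props[OF mu_range, of A X "\<lambda>x. (f x)\<^sup>2", OF allI[OF AF[OF m_f2]]]
  note Pq = shilkret_props[OF mu_range, of A X "\<lambda>x. x\<^sup>2 * (f x)\<^sup>2", OF allI[OF AF[OF m_xf]]]
  define a where "a = \<mu> A"
  define n where "n = shilkret X \<mu> A f"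
  define nx where "nx = shilkret X \<mu> A (\<lambda>x. x)"
  define p where "p = shilkret X \<mu> A (\<lambda>x. (f x)\<^sup>2)"
  define q where "q = shilkret X \<mu> A (\<lambda>x. x\<^sup>2 * (f x)\<^sup>2)"
  have a01: "0 \<le> a" "a \<le> 1" using mu_range A_in a_def by auto
  have n0: "0 \<le> n" "0 \<le> nx" "0 \<le> p" "0 \<le> q" using Pf(3) Px(3) Pf2(3) Pq(3) n_def nx_def p_def q_def by auto
  have apos: "0 < a" "0 < nx" using K_pos a01 n0 a_def nx_def by (auto simp: zero_less_mult_iff)
  have np: "n \<le> sqrt p" unfolding n_def
  proof (rule Pf(2))
    fix \<alpha> :: real assume al: "\<alpha> \<in> {0..1}"
    define m where "m = \<mu> (A \<inter> {x\<in>X. f x \<ge> \<alpha>})"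
    have m01: "0 \<le> m" "m \<le> 1" using mu_range AF[OF f_mono] m_def by auto
    have eq: "{x\<in>X. f x \<ge> \<alpha>} = {x\<in>X. (f x)\<^sup>2 \<ge> \<alpha>\<^sup>2}"
      using al f_range by (auto intro: power_mono power2_le_imp_le)
    have a2: "\<alpha>\<^sup>2 \<in> {0..1}" using al by (auto simp: power_le_one)
    have "(\<alpha> * m)\<^sup>2 \<le> \<alpha>\<^sup>2 * m"
      using m01 by (rule sq_le_aux)
    also have "\<dots> \<le> p" using Pf2(1)[OF a2] eq m_def p_def by simp
    finally show "\<alpha> * \<mu> (A \<inter> {x\<in>X. f x \<ge> \<alpha>}) \<le> sqrt p"
      using m_def real_le_rsqrt by blast
  qed
  have core: "\<alpha> * \<mu> (A \<inter> {x\<in>X. f x \<ge> \<alpha>}) * (\<beta> * \<mu> (A \<inter> {x\<in>X. x \<ge> \<beta>})) \<le> sqrt q"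
    if al: "\<alpha> \<in> {0..1}" and be: "\<beta> \<in> {0..1}" for \<alpha> \<beta>
  proof -
    define U where "U = {x\<in>X. f x \<ge> \<alpha>}"
    define V where "V = {x\<in>X. x \<ge> \<beta>}"
    define W where "W = A \<inter> {x\<in>X. x\<^sup>2 * (f x)\<^sup>2 \<ge> (\<alpha>*\<beta>)\<^sup>2}"
    have UF: "A \<inter> U \<in> F" and VF: "A \<inter> V \<in> F" and WF: "W \<in> F"
      using AF[OF f_mono] AF[OF m_id] AF[OF m_xf] U_def V_def W_def by auto
    have sub: "U \<inter> V \<subseteq> {x\<in>X. x\<^sup>2 * (f x)\<^sup>2 \<ge> (\<alpha>*\<beta>)\<^sup>2}"
    proof
      fix x assume x: "x \<in> U \<inter> V"
      then have "\<alpha> * \<beta> \<le> f x * x" using al be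
        by (auto simp: U_def V_def intro!: mult_mono)
      then have "(\<alpha>*\<beta>)\<^sup>2 \<le> (f x * x)\<^sup>2" using al be by (intro power_mono) auto
      then show "x \<in> {x\<in>X. x\<^sup>2 * (f x)\<^sup>2 \<ge> (\<alpha>*\<beta>)\<^sup>2}" using x U_def
        by (simp add: power_mult_distrib mult.commute)
    qed
    have nest: "U \<subseteq> V \<or> V \<subseteq> U"
    proof (rule ccontr)
      assume "\<not> (U \<subseteq> V \<or> V \<subseteq> U)"
      then obtain u v where u: "u \<in> U" "u \<notin> V" and v: "v \<in> V" "v \<notin> U" by blast
      show False
      proof (cases "u \<le> v")
        case True
        then have "f u \<le> f v" using mono_onD[OF f_mono] u v U_def V_def by auto
        then show False using u v U_def V_def by auto
      next
        case False
        then show False using u v U_def V_def by auto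
      qed
    qed
    define mu where "mu = \<mu> (A \<inter> U)"
    define mv where "mv = \<mu> (A \<inter> V)"
    define mw where "mw = \<mu> W"
    have r: "0 \<le> mu" "mu \<le> 1" "0 \<le> mv" "mv \<le> 1" "0 \<le> mw" "mw \<le> 1"
      using mu_range UF VF WF mu_def mv_def mw_def by auto
    have "min mu mv \<le> mw"
    proof (cases "U \<subseteq> V")
      case True
      then have "A \<inter> U \<subseteq> W" using sub W_def U_def by auto
      then show ?thesis using mono_meas[OF UF WF] mu_def mw_def by simp
    next
      case False
      then have "A \<inter> V \<subseteq> W" using nest sub W_def V_def by auto
      then show ?thesis using mono_meas[OF VF WF] mv_def mw_def by simp
    qed
    have ab: "0 \<le> \<alpha> * \<beta>" "\<alpha>*\<beta> \<in> {0..1}" using al be by (auto simp: mult_le_one)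
    have ab2: "(\<alpha>*\<beta>)\<^sup>2 \<in> {0..1}" using ab by (auto simp: power_le_one)
    have "mu * mv \<le> min mu mv" using r by (simp add: mult_left_le mult_left_le_one_le)
    also have "\<dots> \<le> mw" by fact
    finally have pm: "mu * mv \<le> mw" .
    have "\<alpha> * mu * (\<beta> * mv) = (\<alpha>*\<beta>) * (mu * mv)" by (simp add: algebra_simps)
    also have "\<dots> \<le> (\<alpha>*\<beta>) * mw" using pm ab by (simp add: mult_left_mono)
    finally have s1: "\<alpha> * mu * (\<beta> * mv) \<le> (\<alpha>*\<beta>) * mw" .
    have "((\<alpha>*\<beta>) * mw)\<^sup>2 \<le> (\<alpha>*\<beta>)\<^sup>2 * mw"
      using r by (intro sq_le_aux) auto
    also have "\<dots> \<le> q" using Pq(1)[OF ab2] W_def mw_def q_def by simp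
    finally have "(\<alpha>*\<beta>) * mw \<le> sqrt q" using real_le_rsqrt by blast
    then show ?thesis using s1 mu_def mv_def U_def V_def by simp
  qed
  have nnx: "n * nx \<le> sqrt q"
  proof (cases "n = 0")
    case True then show ?thesis using n0 by simp
  next
    case False
    then have npos: "0 < n" using n0 by simp
    have "nx \<le> sqrt q / n" unfolding nx_def
    proof (rule Px(2))
      fix \<beta> :: real assume be: "\<beta> \<in> {0..1}"
      define t where "t = \<beta> * \<mu> (A \<inter> {x\<in>X. x \<ge> \<beta>})"
      have t0: "0 \<le> t" using be mu_range AF[OF m_id] t_def by auto
      have "n * t \<le> sqrt q"
      proof (cases "t = 0")
        case True then show ?thesis using n0 by simp
      next
        case False
        then have tpos: "0 < t" using t0 by simp
        have "n \<le> sqrt q / t" unfolding n_def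
        proof (rule Pf(2))
          fix \<alpha> :: real assume al: "\<alpha> \<in> {0..1}"
          show "\<alpha> * \<mu> (A \<inter> {x\<in>X. f x \<ge> \<alpha>}) \<le> sqrt q / t"
            using core[OF al be] tpos t_def by (simp add: pos_le_divide_eq)
        qed
        then show ?thesis using tpos by (simp add: pos_le_divide_eq mult.commute)
      qed
      then show "\<beta> * \<mu> (A \<inter> {x\<in>X. x \<ge> \<beta>}) \<le> sqrt q / n"
        using npos t_def by (simp add: pos_le_divide_eq mult.commute)
    qed
    then show ?thesis using npos by (simp add: pos_le_divide_eq mult.commute)
  qed
  have n2p: "n\<^sup>2 \<le> p"
  proof -
    have "n\<^sup>2 \<le> (sqrt p)\<^sup>2" using np n0 by (intro power_mono) auto
    then show ?thesis using n0 by simp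
  qed
  have n2q: "(n*nx)\<^sup>2 \<le> q"
  proof -
    have "(n*nx)\<^sup>2 \<le> (sqrt q)\<^sup>2" using nnx n0 by (intro power_mono) auto
    then show ?thesis using n0 by simp
  qed
  have p4: "sqrt n \<le> p powr (1/4)"
  proof -
    have "(n\<^sup>2) powr (1/4) \<le> p powr (1/4)"
      using n2p n0 by (intro powr_mono2) auto
    moreover have "(n\<^sup>2) powr (1/4) = sqrt n"
      using n0 by (intro sq_powr4) auto
    ultimately show ?thesis by simp
  qed
  have q4: "sqrt (n * nx) \<le> q powr (1/4)"
  proof -
    have "((n*nx)\<^sup>2) powr (1/4) \<le> q powr (1/4)"
      using n2q n0 by (intro powr_mono2) auto
    moreover have "((n*nx)\<^sup>2) powr (1/4) = sqrt (n*nx)"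
      using n0 by (intro sq_powr4) auto
    ultimately show ?thesis by simp
  qed
  have "n \<le> n / sqrt a"
    using a01 apos n0 by (simp add: le_divide_eq real_sqrt_le_1_iff mult_left_le)
  also have "n / sqrt a = 1 / sqrt (a * nx) * sqrt n * sqrt (n * nx)"
    using apos n0 by (simp add: real_sqrt_mult field_simps)
  also have "\<dots> \<le> 1 / sqrt (a * nx) * p powr (1/4) * q powr (1/4)"
    using p4 q4 n0 apos by (intro mult_mono) auto
  finally show ?thesis using a_def n_def nx_def p_def q_def by simp
qed

end
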